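(* Let $(A,I)$ be a perfect prism with Frobenius $\varphi$. Let $x\in A$ be such that $\varphi(x)=x^p(1+py)$ for some $y\in A$. Then \[x=[a]\prod_{i=1}^{\infty}\bigl(1+p\varphi^{-i}(y)\bigr)^{p^{i-1}},\] where $a\in A/p$ is the reduction of $x$ modulo $p$ and $[a]\in A=W(A/p)$ is its Teichmüller lift.
   Context: For a perfect prism $(A,I)$, $A$ is $p$-torsion free and classically $p$-complete with $A/p$ perfect, so $A=W(A/p)$, $\varphi$ is an automorphism, and the infinite product converges $p$-adically. *)

theory Defs
  imports "HOL-Computational_Algebra.Primes"
begin

definition is_ideal :: "'a::comm_ring_1 set \<Rightarrow> bool" where
  "is_ideal I \<longleftrightarrow> 0 \<in> I \<and> (\<forall>x\<in>I. \<forall>y\<in>I. x + y \<in> I) \<and> (\<forall>r. \<forall>x\<in>I. r * x \<in> I)"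

definition ideal_gen :: "'a::comm_ring_1 set \<Rightarrow> 'a set" where
  "ideal_gen S = \<Inter>{K. is_ideal K \<and> S \<subseteq> K}"

definition ideal_mult :: "'a::comm_ring_1 set \<Rightarrow> 'a set \<Rightarrow> 'a set" where
  "ideal_mult I J = ideal_gen {a * b | a b. a \<in> I \<and> b \<in> J}"

primrec ideal_power :: "'a::comm_ring_1 set \<Rightarrow> nat \<Rightarrow> 'a set" where
  "ideal_power J 0 = UNIV"
| "ideal_power J (Suc n) = ideal_mult J (ideal_power J n)"

text \<open>Invertible ideal (= ideal defining an effective Cartier divisor):
  some product I J is principal, generated by a nonzerodivisor.\<close>
definition invertible_ideal :: "'a::comm_ring_1 set \<Rightarrow> bool" where
  "invertible_ideal I \<longleftrightarrow> is_ideal I \<and>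
     (\<exists>J f. is_ideal J \<and> ideal_mult I J = ideal_gen {f} \<and> (\<forall>z. f * z = 0 \<longrightarrow> z = 0))"

definition adic_lim :: "'a::comm_ring_1 set \<Rightarrow> (nat \<Rightarrow> 'a) \<Rightarrow> 'a \<Rightarrow> bool" where
  "adic_lim J u L \<longleftrightarrow> (\<forall>k. \<exists>N. \<forall>n\<ge>N. u n - L \<in> ideal_power J k)"

definition adic_cauchy :: "'a::comm_ring_1 set \<Rightarrow> (nat \<Rightarrow> 'a) \<Rightarrow> bool" where
  "adic_cauchy J u \<longleftrightarrow> (\<forall>k. \<exists>N. \<forall>m\<ge>N. \<forall>n\<ge>N. u m - u n \<in> ideal_power J k)"

definition adically_complete :: "'a::comm_ring_1 set \<Rightarrow> bool" where
  "adically_complete J \<longleftrightarrow> (\<Inter>k. ideal_power J k) = {0} \<and>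
     (\<forall>u. adic_cauchy J u \<longrightarrow> (\<exists>L. adic_lim J u L))"

abbreviation pA :: "nat \<Rightarrow> 'a::comm_ring_1 set" where
  "pA p \<equiv> ideal_gen {of_nat p}"

text \<open>Frobenius lift: a ring endomorphism reducing to x \<mapsto> x^p modulo p
  (for p-torsion free A this is the same as a delta-structure).\<close>
definition frobenius_lift :: "nat \<Rightarrow> ('a::comm_ring_1 \<Rightarrow> 'a) \<Rightarrow> bool" where
  "frobenius_lift p \<phi> \<longleftrightarrow> \<phi> 1 = 1 \<and> (\<forall>x y. \<phi> (x + y) = \<phi> x + \<phi> y) \<and>
     (\<forall>x y. \<phi> (x * y) = \<phi> x * \<phi> y) \<and> (\<forall>x. \<phi> x - x ^ p \<in> pA p)"

definition perfect_prism :: "nat \<Rightarrow> ('a::comm_ring_1 \<Rightarrow> 'a) \<Rightarrow> 'a set \<Rightarrow> bool" where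
  "perfect_prism p \<phi> I \<longleftrightarrow> prime p \<and>
     (\<forall>x::'a. of_nat p * x = 0 \<longrightarrow> x = 0) \<and>
     frobenius_lift p \<phi> \<and> bij \<phi> \<and>
     invertible_ideal I \<and>
     adically_complete (pA p :: 'a set) \<and>
     adically_complete (ideal_gen (pA p \<union> I)) \<and>
     of_nat p \<in> ideal_gen (I \<union> \<phi> ` I)"

text \<open>Teichmueller lift [a] of the reduction a = x mod p, under A = W(A/p):
  [a] is the p-adic limit of b_n^(p^n), for any lifts b_n of a^(1/p^n)
  (i.e. b_n^(p^n) \<equiv> x mod p).\<close>
definition teich :: "nat \<Rightarrow> 'a::comm_ring_1 \<Rightarrow> 'a" where
  "teich p x = (THE t. \<forall>b. (\<forall>n. b n ^ (p ^ n) - x \<in> pA p) \<longrightarrow>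
                       adic_lim (pA p) (\<lambda>n. b n ^ (p ^ n)) t)"

end

theory Submission
  imports Defs
begin

lemma ideal_gen_dvd:
  fixes d :: "'a::comm_ring_1"
  assumes "d \<in> S" "\<forall>s\<in>S. d dvd s"
  shows "ideal_gen S = {z. d dvd z}"
proof
  have "is_ideal {z. d dvd z}" unfolding is_ideal_def by auto
  then show "ideal_gen S \<subseteq> {z. d dvd z}" unfolding ideal_gen_def using assms(2) by auto
next
  show "{z. d dvd z} \<subseteq> ideal_gen S"
  proof
    fix z assume "z \<in> {z. d dvd z}"
    then obtain r where r: "z = d * r" by auto
    show "z \<in> ideal_gen S" unfolding ideal_gen_def
    proof
      fix K assume "K \<in> {K. is_ideal K \<and> S \<subseteq> K}"
      then have "is_ideal K" "d \<in> K" using assms(1) by auto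
      then have "r * d \<in> K" unfolding is_ideal_def by auto
      then show "z \<in> K" using r by (simp add: mult.commute)
    qed
  qed
qed

lemma pA_eq: "(pA p :: 'a::comm_ring_1 set) = {z. of_nat p dvd z}"
  by (rule ideal_gen_dvd) auto

lemma ipow_eq: "ideal_power (pA p :: 'a::comm_ring_1 set) k = {z. (of_nat p)^k dvd z}"
proof (induction k)
  case 0 then show ?case by auto
next
  case (Suc k)
  have "ideal_power (pA p :: 'a set) (Suc k) = ideal_gen {a*b | a b. a \<in> pA p \<and> b \<in> ideal_power (pA p) k}"
    by (simp add: ideal_mult_def)
  also have "... = ideal_gen {a*b | a b. of_nat p dvd a \<and> (of_nat p :: 'a)^k dvd b}"
    by (subst Suc) (simp only: pA_eq mem_Collect_eq)
  also have "... = {z. (of_nat p)^(Suc k) dvd z}"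
  proof (rule ideal_gen_dvd)
    show "(of_nat p :: 'a) ^ Suc k \<in> {a*b | a b. of_nat p dvd a \<and> (of_nat p :: 'a)^k dvd b}"
      using power_Suc[of "of_nat p :: 'a" k] dvd_refl by blast
    show "\<forall>s\<in>{a*b | a b. of_nat p dvd a \<and> (of_nat p :: 'a)^k dvd b}. (of_nat p :: 'a) ^ Suc k dvd s"
      by (auto simp: mult_dvd_mono)
  qed
  finally show ?case .
qed

lemma adic_lim_iff: "adic_lim (pA p) u (L::'a::comm_ring_1) \<longleftrightarrow> (\<forall>k. \<exists>N. \<forall>n\<ge>N. (of_nat p)^k dvd (u n - L))"
  unfolding adic_lim_def ipow_eq by simp

lemma adic_cauchy_iff: "adic_cauchy (pA p) (u :: nat \<Rightarrow> 'a::comm_ring_1) \<longleftrightarrow> (\<forall>k. \<exists>N. \<forall>m\<ge>N. \<forall>n\<ge>N. (of_nat p)^k dvd (u m - u n))"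
  unfolding adic_cauchy_def ipow_eq by simp

lemma complete_sep:
  assumes "adically_complete (pA p :: 'a::comm_ring_1 set)" "\<forall>k. (of_nat p)^k dvd (z::'a)"
  shows "z = 0"
  using assms unfolding adically_complete_def ipow_eq by auto

lemma complete_conv:
  assumes "adically_complete (pA p :: 'a::comm_ring_1 set)" "adic_cauchy (pA p) (u :: nat \<Rightarrow> 'a)"
  shows "\<exists>L. adic_lim (pA p) u L"
  using assms unfolding adically_complete_def by auto

lemma lim_unique:
  assumes "adically_complete (pA p :: 'a::comm_ring_1 set)" "adic_lim (pA p) u (L::'a)" "adic_lim (pA p) u M"
  shows "L = M"
proof -
  have "\<forall>k. (of_nat p)^k dvd (L - M)"
  proof
    fix k
    obtain N1 where "\<forall>n\<ge>N1. (of_nat p)^k dvd (u n - L)" using assms(2) adic_lim_iff by blast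
    moreover obtain N2 where "\<forall>n\<ge>N2. (of_nat p)^k dvd (u n - M)" using assms(3) adic_lim_iff by blast
    ultimately have "(of_nat p)^k dvd ((u (max N1 N2) - M) - (u (max N1 N2) - L))"
      by (intro dvd_diff[of "(of_nat p)^k" "u (max N1 N2) - M" "u (max N1 N2) - L"]) auto
    then show "(of_nat p)^k dvd (L - M)" by simp
  qed
  then have "L - M = 0" by (rule complete_sep[OF assms(1)])
  then show ?thesis by simp
qed

lemma lim_mult:
  assumes "adic_lim (pA p) u (L::'a::comm_ring_1)" "adic_lim (pA p) v M"
  shows "adic_lim (pA p) (\<lambda>n. u n * v n) (L * M)"
  unfolding adic_lim_iff
proof
  fix k
  obtain N1 where 1: "\<forall>n\<ge>N1. (of_nat p)^k dvd (u n - L)" using assms(1) adic_lim_iff by blast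
  obtain N2 where 2: "\<forall>n\<ge>N2. (of_nat p)^k dvd (v n - M)" using assms(2) adic_lim_iff by blast
  have "\<forall>n\<ge>max N1 N2. (of_nat p)^k dvd (u n * v n - L * M)"
  proof (intro allI impI)
    fix n assume "n \<ge> max N1 N2"
    then have "(of_nat p)^k dvd (u n * (v n - M) + (u n - L) * M)"
      using 1 2 by (intro dvd_add dvd_mult dvd_mult2) auto
    then show "(of_nat p)^k dvd (u n * v n - L * M)" by (simp add: algebra_simps)
  qed
  then show "\<exists>N. \<forall>n\<ge>N. (of_nat p)^k dvd (u n * v n - L * M)" by blast
qed

lemma cauchy_succ:
  assumes "\<forall>n. (of_nat p :: 'a::comm_ring_1)^(Suc n) dvd (u (Suc n) - u n)"
  shows "adic_cauchy (pA p) u"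
  unfolding adic_cauchy_iff
proof
  fix k
  have a: "(of_nat p :: 'a)^k dvd (u m - u k)" if "k \<le> m" for m
    using that
  proof (induction m rule: dec_induct)
    case base then show ?case by simp
  next
    case (step m)
    have "(of_nat p :: 'a)^k dvd (of_nat p)^(Suc m)" using step.hyps by (intro le_imp_power_dvd) auto
    then have "(of_nat p :: 'a)^k dvd (u (Suc m) - u m)" using assms dvd_trans by blast
    then have "(of_nat p :: 'a)^k dvd ((u (Suc m) - u m) + (u m - u k))" using step(3) by (rule dvd_add)
    then show ?case by simp
  qed
  have "\<forall>m\<ge>k. \<forall>n\<ge>k. (of_nat p :: 'a)^k dvd (u m - u n)"
  proof (intro allI impI)
    fix m n assume "m \<ge> k" "n \<ge> k"
    then have "(of_nat p :: 'a)^k dvd ((u m - u k) - (u n - u k))" using a by (intro dvd_diff[of _ "u m - u k" "u n - u k"]) auto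
    then show "(of_nat p :: 'a)^k dvd (u m - u n)" by simp
  qed
  then show "\<exists>N. \<forall>m\<ge>N. \<forall>n\<ge>N. (of_nat p :: 'a)^k dvd (u m - u n)" by blast
qed

lemma dvd_pow_diff: "((a::'a::comm_ring_1) - b) dvd (a^n - b^n)"
  using power_diff_sumr2[of a n b] by (metis dvd_triv_left)

lemma key:
  fixes a b :: "'a::comm_ring_1"
  assumes "(of_nat p)^k dvd (a - b)" "of_nat p dvd (a - b)"
  shows "(of_nat p)^(Suc k) dvd (a^p - b^p)"
proof -
  define S where "S = (\<Sum>i<p. b^(p - Suc i) * a^i)"
  have e1: "(\<Sum>i<p. b^(p - Suc i) * b^i) = of_nat p * b^(p-1)"
  proof -
    have "(\<Sum>i<p. b^(p - Suc i) * b^i) = (\<Sum>i<p. b^(p-1))"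
      by (rule sum.cong) (auto simp: power_add[symmetric])
    then show ?thesis by simp
  qed
  have "S - of_nat p * b^(p-1) = (\<Sum>i<p. b^(p - Suc i) * (a^i - b^i))"
    unfolding S_def e1[symmetric] by (simp add: sum_subtractf right_diff_distrib)
  moreover have "of_nat p dvd (\<Sum>i<p. b^(p - Suc i) * (a^i - b^i))"
    using assms(2) dvd_pow_diff dvd_trans by (intro dvd_sum dvd_mult) blast
  ultimately have "of_nat p dvd ((S - of_nat p * b^(p-1)) + of_nat p * b^(p-1))"
    by (intro dvd_add) auto
  then have "of_nat p dvd S" by simp
  from mult_dvd_mono[OF assms(1) this] have "(of_nat p)^k * of_nat p dvd (a - b) * S" .
  then show ?thesis using power_diff_sumr2[of a p b] S_def by (simp add: mult.commute)
qed

lemma key_iter: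
  fixes a b :: "'a::comm_ring_1"
  assumes "of_nat p dvd (a - b)"
  shows "(of_nat p)^(Suc n) dvd (a^(p^n) - b^(p^n))"
proof (induction n)
  case 0 then show ?case using assms by simp
next
  case (Suc n)
  have h: "of_nat p dvd (a^(p^n) - b^(p^n))"
    by (rule dvd_trans[OF _ Suc]) simp
  have e: "c^(p^Suc n) = (c^(p^n))^p" for c :: 'a by (simp add: power_mult[symmetric] mult.commute)
  from key[OF Suc h] show ?case unfolding e .
qed


definition rhom :: "('a::comm_ring_1 \<Rightarrow> 'a) \<Rightarrow> bool" where
  "rhom f \<longleftrightarrow> f 1 = 1 \<and> (\<forall>x y. f (x + y) = f x + f y) \<and> (\<forall>x y. f (x * y) = f x * f y)"

lemma rhom_diff: assumes "rhom f" shows "f (a - b) = f a - f b"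
proof -
  have "f (a - b) + f b = f a" using assms unfolding rhom_def by (metis diff_add_cancel)
  then show ?thesis by (simp add: eq_diff_eq)
qed

lemma rhom_0: assumes "rhom f" shows "f 0 = 0"
proof -
  have "f (0 + 0) = f 0 + f 0" using assms unfolding rhom_def by blast
  then show ?thesis by simp
qed

lemma rhom_of_nat: "rhom f \<Longrightarrow> f (of_nat n) = of_nat n"
  by (induction n) (auto simp: rhom_def rhom_0)

lemma rhom_power: "rhom f \<Longrightarrow> f (a ^ n) = f a ^ n"
  by (induction n) (auto simp: rhom_def)

lemma rhom_inv:
  assumes "rhom f" "bij f"
  shows "rhom (inv f)"
proof -
  have fi: "f (inv f z) = z" for z using assms(2) by (simp add: bij_is_surj surj_f_inv_f)
  have if_: "inv f (f z) = z" for z using assms(2) by (simp add: bij_is_inj)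
  show ?thesis unfolding rhom_def
  proof (intro conjI allI)
    show "inv f 1 = 1" using if_[of 1] assms(1) by (simp add: rhom_def)
    fix x y
    show "inv f (x + y) = inv f x + inv f y"
      using if_[of "inv f x + inv f y"] assms(1) fi by (simp add: rhom_def)
    show "inv f (x * y) = inv f x * inv f y"
      using if_[of "inv f x * inv f y"] assms(1) fi by (simp add: rhom_def)
  qed
qed

lemma rhom_funpow: "rhom f \<Longrightarrow> rhom (f ^^ n)"
  by (induction n) (auto simp: rhom_def)

lemma perfect1:
  fixes z :: "'a::comm_ring_1"
  assumes "perfect_prism p (\<phi>::'a::comm_ring_1 \<Rightarrow> 'a) I" "of_nat p dvd z ^ p"
  shows "of_nat p dvd z"
proof -
  have fl: "frobenius_lift p \<phi>" and b: "bij \<phi>" using assms(1) unfolding perfect_prism_def by auto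
  have h: "rhom \<phi>" using fl unfolding frobenius_lift_def rhom_def by auto
  have "of_nat p dvd (\<phi> z - z ^ p)" using fl unfolding frobenius_lift_def pA_eq by auto
  then have "of_nat p dvd ((\<phi> z - z ^ p) + z ^ p)" using assms(2) by (rule dvd_add)
  then obtain w where w: "\<phi> z = of_nat p * w" by (auto elim: dvdE)
  have "\<phi> (of_nat p * inv \<phi> w) = of_nat p * w"
    using h rhom_of_nat[OF h] b by (simp add: rhom_def bij_is_surj surj_f_inv_f)
  then have "z = of_nat p * inv \<phi> w" using w b by (metis bij_is_inj injD)
  then show ?thesis by simp
qed

lemma perfect2:
  fixes u v :: "'a::comm_ring_1"
  assumes "perfect_prism p (\<phi>::'a::comm_ring_1 \<Rightarrow> 'a) I" "of_nat p dvd (u ^ p - v ^ p)"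
  shows "of_nat p dvd (u - v)"
proof -
  have fl: "frobenius_lift p \<phi>" using assms(1) unfolding perfect_prism_def by auto
  have h: "rhom \<phi>" using fl unfolding frobenius_lift_def rhom_def by auto
  have d: "of_nat p dvd (\<phi> c - c ^ p)" for c using fl unfolding frobenius_lift_def pA_eq by auto
  have "of_nat p dvd (((u ^ p - v ^ p) + (\<phi> u - u ^ p)) - (\<phi> v - v ^ p)) - (\<phi> (u - v) - (u - v) ^ p)"
    by (rule dvd_diff[OF dvd_diff[OF dvd_add[OF assms(2) d] d] d])
  moreover have "(((u ^ p - v ^ p) + (\<phi> u - u ^ p)) - (\<phi> v - v ^ p)) - (\<phi> (u - v) - (u - v) ^ p) = (u - v) ^ p"
    using rhom_diff[OF h] by simp
  ultimately have "of_nat p dvd (u - v) ^ p" by metis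
  then show ?thesis by (rule perfect1[OF assms(1)])
qed

lemma perfect3:
  fixes u v :: "'a::comm_ring_1"
  assumes "perfect_prism p (\<phi>::'a::comm_ring_1 \<Rightarrow> 'a) I" "of_nat p dvd (u ^ (p ^ n) - v ^ (p ^ n))"
  shows "of_nat p dvd (u - v)"
  using assms(2)
proof (induction n arbitrary: u v)
  case 0 then show ?case by simp
next
  case (Suc n)
  have e: "c^(p^Suc n) = (c^p)^(p^n)" for c :: 'a by (simp add: power_mult[symmetric])
  have "of_nat p dvd (u^p - v^p)" using Suc.IH Suc.prems unfolding e by blast
  then show ?case by (rule perfect2[OF assms(1)])
qed


lemma rhom_app: "rhom g \<Longrightarrow> g (a ^ p * (1 + of_nat p * b)) = g a ^ p * (1 + of_nat p * g b)"
  by (simp add: rhom_def rhom_power rhom_of_nat)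

theorem lemma2p12:
  fixes p :: nat and \<phi> :: "'a::comm_ring_1 \<Rightarrow> 'a" and I :: "'a set" and x y :: 'a
  assumes "perfect_prism p \<phi> I"
    and "\<phi> x = x ^ p * (1 + of_nat p * y)"
  shows "\<exists>Q. adic_lim (pA p)
              (\<lambda>N. \<Prod>i\<in>{1..N}. (1 + of_nat p * ((inv \<phi> ^^ i) y)) ^ (p ^ (i - 1))) Q
           \<and> x = teich p x * Q"
proof -
  have fl: "frobenius_lift p \<phi>" and bj: "bij \<phi>" and comp: "adically_complete (pA p :: 'a set)"
    using assms(1) unfolding perfect_prism_def by auto
  have h: "rhom \<phi>" using fl unfolding frobenius_lift_def rhom_def by auto
  define \<psi> where "\<psi> = inv \<phi>"
  have h\<psi>: "rhom \<psi>" unfolding \<psi>_def by (rule rhom_inv[OF h bj])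
  have hn: "rhom (\<psi> ^^ n)" for n by (rule rhom_funpow[OF h\<psi>])
  have \<psi>\<phi>: "\<psi> (\<phi> z) = z" for z unfolding \<psi>_def using bj by (simp add: bij_is_inj)
  define c where "c n = (\<psi> ^^ n) x" for n
  define e where "e n = 1 + of_nat p * (\<psi> ^^ n) y" for n
  define R where "R N = (\<Prod>i\<in>{1..N}. e i ^ (p ^ (i - 1)))" for N
  have Rdef: "(\<lambda>N. \<Prod>i\<in>{1..N}. (1 + of_nat p * ((inv \<phi> ^^ i) y)) ^ (p ^ (i - 1))) = R"
    by (simp add: R_def e_def \<psi>_def fun_eq_iff)
  have F1: "c n = c (Suc n) ^ p * e (Suc n)" for n
  proof -
    have "(\<psi> ^^ Suc n) (\<phi> x) = c n" unfolding c_def funpow_Suc_right comp_def \<psi>\<phi> ..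
    moreover have "(\<psi> ^^ Suc n) (\<phi> x) = c (Suc n) ^ p * e (Suc n)"
      unfolding assms(2) c_def e_def by (rule rhom_app[OF hn])
    ultimately show ?thesis by simp
  qed
  have F2: "x = c n ^ (p ^ n) * R n" for n
  proof (induction n)
    case 0 then show ?case by (simp add: c_def R_def)
  next
    case (Suc n)
    have "c n ^ (p ^ n) = c (Suc n) ^ (p ^ Suc n) * e (Suc n) ^ (p ^ n)"
      by (subst F1) (simp add: power_mult_distrib power_mult[symmetric] mult.commute)
    moreover have "R (Suc n) = R n * e (Suc n) ^ (p ^ n)" by (simp add: R_def)
    ultimately show ?case using Suc by (simp add: mult.assoc)
  qed
  have F3: "(of_nat p :: 'a) ^ Suc n dvd (R (Suc n) - R n)" for n
  proof -
    have "(of_nat p :: 'a) dvd (e (Suc n) - 1)" by (simp add: e_def)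
    from key_iter[OF this, of n]
    have "(of_nat p :: 'a) ^ Suc n dvd R n * (e (Suc n) ^ (p ^ n) - 1)" by simp
    moreover have "R (Suc n) - R n = R n * (e (Suc n) ^ (p ^ n) - 1)" by (simp add: R_def algebra_simps)
    ultimately show ?thesis by simp
  qed
  have F4: "(of_nat p :: 'a) dvd (R n - 1)" for n
  proof (induction n)
    case 0 then show ?case by (simp add: R_def)
  next
    case (Suc n)
    have "(of_nat p :: 'a) dvd (R (Suc n) - R n)" using F3[of n] by (rule dvd_trans[rotated]) simp
    from dvd_add[OF this Suc] show ?case by simp
  qed
  have F5: "(of_nat p :: 'a) ^ Suc n dvd (c (Suc n) ^ (p ^ Suc n) - c n ^ (p ^ n))" for n
  proof -
    have "c (Suc n) ^ p - c n = - (of_nat p * (c (Suc n) ^ p * (\<psi> ^^ Suc n) y))"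
      by (subst F1) (simp add: e_def algebra_simps)
    then have "(of_nat p :: 'a) dvd (c (Suc n) ^ p - c n)" by simp
    from key_iter[OF this, of n] show ?thesis
      by (simp add: power_mult[symmetric] mult.commute)
  qed
  have F6: "(of_nat p :: 'a) dvd (x - c n ^ (p ^ n))" for n
  proof -
    have "x - c n ^ (p ^ n) = c n ^ (p ^ n) * (R n - 1)" using F2[of n] by (simp add: algebra_simps)
    then show ?thesis using F4[of n] by simp
  qed
  obtain T where T: "adic_lim (pA p) (\<lambda>n. c n ^ (p ^ n)) T"
    using complete_conv[OF comp cauchy_succ[of p "\<lambda>n. c n ^ (p ^ n)"]] F5 by blast
  obtain Q where Q: "adic_lim (pA p) R Q"
    using complete_conv[OF comp cauchy_succ[of p R]] F3 by blast
  have L1: "adic_lim (pA p) (\<lambda>n. c n ^ (p ^ n) * R n) (T * Q)" by (rule lim_mult[OF T Q])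
  have eqx: "(\<lambda>n. c n ^ (p ^ n) * R n) = (\<lambda>n. x)" using F2 by (simp add: fun_eq_iff)
  have L2: "adic_lim (pA p) (\<lambda>n. x) x" unfolding adic_lim_iff by simp
  have xTQ: "x = T * Q" using lim_unique[OF comp L2 L1[unfolded eqx]] .
  have good: "adic_lim (pA p) (\<lambda>n. b n ^ (p ^ n)) T" if bh: "\<forall>n. b n ^ (p ^ n) - x \<in> pA p" for b
  proof -
    have bc: "(of_nat p :: 'a) ^ Suc n dvd (b n ^ (p ^ n) - c n ^ (p ^ n))" for n
    proof -
      have "(of_nat p :: 'a) dvd ((b n ^ (p ^ n) - x) + (x - c n ^ (p ^ n)))"
        using bh F6 unfolding pA_eq by (intro dvd_add) auto
      then have "(of_nat p :: 'a) dvd (b n ^ (p ^ n) - c n ^ (p ^ n))" by simp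
      then have "(of_nat p :: 'a) dvd (b n - c n)" by (rule perfect3[OF assms(1)])
      then show ?thesis by (rule key_iter)
    qed
    show ?thesis unfolding adic_lim_iff
    proof
      fix k
      obtain N where N: "\<forall>n\<ge>N. (of_nat p :: 'a)^k dvd (c n ^ (p ^ n) - T)" using T unfolding adic_lim_iff by blast
      have "\<forall>n\<ge>max N k. (of_nat p :: 'a)^k dvd (b n ^ (p ^ n) - T)"
      proof (intro allI impI)
        fix n assume n: "n \<ge> max N k"
        have "(of_nat p :: 'a)^k dvd (of_nat p)^Suc n" using n by (intro le_imp_power_dvd) auto
        then have "(of_nat p :: 'a)^k dvd (b n ^ (p ^ n) - c n ^ (p ^ n))" by (rule dvd_trans[OF _ bc])
        moreover have "(of_nat p :: 'a)^k dvd (c n ^ (p ^ n) - T)" using N n by simp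
        ultimately have "(of_nat p :: 'a)^k dvd ((b n ^ (p ^ n) - c n ^ (p ^ n)) + (c n ^ (p ^ n) - T))"
          by (rule dvd_add)
        then show "(of_nat p :: 'a)^k dvd (b n ^ (p ^ n) - T)" by simp
      qed
      then show "\<exists>N. \<forall>n\<ge>N. (of_nat p :: 'a)^k dvd (b n ^ (p ^ n) - T)" by blast
    qed
  qed
  have "teich p x = T" unfolding teich_def
  proof (rule the_equality)
    show "\<forall>b. (\<forall>n. b n ^ p ^ n - x \<in> pA p) \<longrightarrow> adic_lim (pA p) (\<lambda>n. b n ^ p ^ n) T"
      using good by blast
  next
    fix t assume "\<forall>b. (\<forall>n. b n ^ p ^ n - x \<in> pA p) \<longrightarrow> adic_lim (pA p) (\<lambda>n. b n ^ p ^ n) t"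
    moreover have "\<forall>n. c n ^ p ^ n - x \<in> pA p"
    proof
      fix n
      have "(of_nat p :: 'a) dvd - (x - c n ^ (p ^ n))" using F6 by (simp only: dvd_minus_iff)
      then show "c n ^ p ^ n - x \<in> pA p" unfolding pA_eq by simp
    qed
    ultimately have "adic_lim (pA p) (\<lambda>n. c n ^ p ^ n) t" by blast
    then show "t = T" by (rule lim_unique[OF comp _ T])
  qed
  then show ?thesis unfolding Rdef using Q xTQ by blast
qed

end
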